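(* Let $V$ be a finite vocabulary. Each word $x\in V$ has a synonym set $S_x\subseteq V$ with $x\in S_x$, the synonym relation being symmetric, and a nonempty perturbation set $P_x\subseteq V$. Fix integers $L\ge1$, $0\le R\le L$ and a finite label set $\mathcal{Y}$ with $|\mathcal{Y}|\ge2$. For $X=x_1,\ldots,x_L\in V^L$ let $S_X=\{X'\in V^L: \sum_i\mathbb{I}\{x'_i\ne x_i\}\le R,\ x'_i\in S_{x_i}\ \forall i\}$ and $\Pi_X(Z)=\prod_{i=1}^L\mathbb{I}\{z_i\in P_{x_i}\}/|P_{x_i}|$. For a classifier $h:V^L\to\mathcal{Y}$ write $g^{\mathrm{RS}}_h(X,c)=\mathbb{P}_{Z\sim\Pi_X}(h(Z)=c)$ and $h^{\mathrm{RS}}(X)=\arg\max_c g^{\mathrm{RS}}_h(X,c)$. Assume $|P_x|=|P_{x'}|$ for every word $x$ and every $x'\in S_x$. Let $q_x=\min_{x'\in S_x}|P_x\cap P_{x'}|/|P_x|$, and for a sentence $X$ order its positions $i_1,\ldots,i_L$ so that $q_{x_{i_1}}\le\cdots\le q_{x_{i_L}}$ and put $q_X=1-\prod_{j=1}^R q_{x_{i_j}}$. Let $f:V^L\to\mathcal{Y}$ be a classifier and $X\in V^L$ a sentence with $f^{\mathrm{RS}}(X)=y$, and let $y_B=\arg\max_{c\ne y}g^{\mathrm{RS}}_f(X,c)$. Then there exists a classifier $f_*:V^L\to\mathcal{Y}$ such that $g^{\mathrm{RS}}_{f_*}(X,c)=g^{\mathrm{RS}}_f(X,c)$ for $c\in\{y,y_B\}$,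 and $$\min_{X'\in S_X}g^{\mathrm{RS}}_{f_*}(X',y)=\max\big(g^{\mathrm{RS}}_{f_*}(X,y)-q_X,0\big),\qquad \max_{X'\in S_X}g^{\mathrm{RS}}_{f_*}(X',y_B)=\min\big(g^{\mathrm{RS}}_{f_*}(X,y_B)+q_X,1\big).$$
   Context: This expresses that the bounds $g^{\mathrm{RS}}(X,c)\pm q_X$ on the smoothed soft scores over adversarial sentences $X'\in S_X$ cannot be improved using only the values $g^{\mathrm{RS}}(X,y)$ and $g^{\mathrm{RS}}(X,y_B)$. *)

theory Defs
  imports Complex_Main
begin

text \<open>Vocabulary V = UNIV of a finite type 'w; sentences in V^L are lists of length L;
labels form a finite type 'y.  S: synonym sets, P: perturbation sets.\<close>

definition sentences :: "nat \<Rightarrow> 'w list set" where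
  "sentences L = {Z. length Z = L}"

definition adv_set :: "('w \<Rightarrow> 'w set) \<Rightarrow> nat \<Rightarrow> nat \<Rightarrow> 'w list \<Rightarrow> 'w list set" where
  "adv_set S L R X = {X'. length X' = L \<and> card {i. i < L \<and> X' ! i \<noteq> X ! i} \<le> R
                          \<and> (\<forall>i<L. X' ! i \<in> S (X ! i))}"

definition smooth_dist :: "('w \<Rightarrow> 'w set) \<Rightarrow> nat \<Rightarrow> 'w list \<Rightarrow> 'w list \<Rightarrow> real" where
  "smooth_dist P L X Z = (\<Prod>i<L. of_bool (Z ! i \<in> P (X ! i)) / real (card (P (X ! i))))"

definition g_RS :: "('w \<Rightarrow> 'w set) \<Rightarrow> nat \<Rightarrow> ('w list \<Rightarrow> 'y) \<Rightarrow> 'w list \<Rightarrow> 'y \<Rightarrow> real" where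
  "g_RS P L h X c = (\<Sum>Z\<in>sentences L. smooth_dist P L X Z * of_bool (h Z = c))"

definition q_word :: "('w \<Rightarrow> 'w set) \<Rightarrow> ('w \<Rightarrow> 'w set) \<Rightarrow> 'w \<Rightarrow> real" where
  "q_word S P x = Min ((\<lambda>x'. real (card (P x \<inter> P x')) / real (card (P x))) ` S x)"

definition q_sent :: "('w \<Rightarrow> 'w set) \<Rightarrow> ('w \<Rightarrow> 'w set) \<Rightarrow> nat \<Rightarrow> 'w list \<Rightarrow> real" where
  "q_sent S P R X = 1 - prod_list (take R (sort (map (q_word S P) X)))"

end

theory Submission
  imports Defs "HOL-Library.Multiset" "HOL-Library.FuncSet"
begin

definition box :: "(nat \<Rightarrow> 'w set) \<Rightarrow> nat \<Rightarrow> 'w list set" where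
  "box F L = {Z. length Z = L \<and> (\<forall>i<L. Z ! i \<in> F i)}"

lemma card_box:
  shows "card (box F L) = (\<Prod>i<L. card (F i))"
proof -
  have inj: "inj_on (\<lambda>Z. restrict (nth Z) {..<L}) (box F L)"
  proof (rule inj_onI)
    fix Z1 Z2 assume a: "Z1 \<in> box F L" "Z2 \<in> box F L"
      "restrict (nth Z1) {..<L} = restrict (nth Z2) {..<L}"
    show "Z1 = Z2"
    proof (rule nth_equalityI)
      show "length Z1 = length Z2" using a by (simp add: box_def)
      fix i assume "i < length Z1"
      then have "i < L" using a by (simp add: box_def)
      then show "Z1 ! i = Z2 ! i" using fun_cong[OF a(3), of i] by simp
    qed
  qed
  have img: "(\<lambda>Z. restrict (nth Z) {..<L}) ` box F L = PiE {..<L} F"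
  proof
    show "(\<lambda>Z. restrict (nth Z) {..<L}) ` box F L \<subseteq> PiE {..<L} F"
      by (auto simp: box_def PiE_iff split: if_splits)
    show "PiE {..<L} F \<subseteq> (\<lambda>Z. restrict (nth Z) {..<L}) ` box F L"
    proof
      fix g assume g: "g \<in> PiE {..<L} F"
      have "map g [0..<L] \<in> box F L" using g by (auto simp: box_def)
      moreover have "restrict (nth (map g [0..<L])) {..<L} = g"
        using g by (auto simp: PiE_def extensional_def)
      ultimately show "g \<in> (\<lambda>Z. restrict (nth Z) {..<L}) ` box F L" by (metis rev_image_eqI)
    qed
  qed
  have "card (box F L) = card (PiE {..<L} F)"
    using card_image[OF inj] img by simp
  also have "\<dots> = (\<Prod>i<L. card (F i))" by (simp add: card_PiE)
  finally show ?thesis .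
qed

lemma prod_of_bool_real:
  "finite A \<Longrightarrow> (\<Prod>i\<in>A. (of_bool (Q i) :: real)) = of_bool (\<forall>i\<in>A. Q i)"
  by (induction A rule: finite_induct) auto

lemma box_sub: "box F L \<subseteq> sentences L"
  by (auto simp: box_def sentences_def)

lemma finite_sentences: "finite (sentences L :: ('w::finite) list set)"
  by (rule finite_subset[OF _ finite_lists_length_eq[of "UNIV::'w set" L]]) (auto simp: sentences_def)

lemma g_card:
  fixes P :: "'w::finite \<Rightarrow> 'w set"
  assumes "length X' = L"
  shows "g_RS P L h X' c =
     real (card {Z \<in> box (\<lambda>i. P (X' ! i)) L. h Z = c}) / (\<Prod>i<L. real (card (P (X' ! i))))"
proof -
  let ?B = "box (\<lambda>i. P (X' ! i)) L"
  let ?N = "(\<Prod>i<L. real (card (P (X' ! i))))"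
  have fsen: "finite (sentences L :: 'w list set)" by (rule finite_sentences)
  have "g_RS P L h X' c = (\<Sum>Z\<in>sentences L. of_bool (Z \<in> ?B \<and> h Z = c) / ?N)"
    unfolding g_RS_def
  proof (rule sum.cong)
    fix Z :: "'w list" assume Z: "Z \<in> sentences L"
    have "smooth_dist P L X' Z = (\<Prod>i<L. of_bool (Z ! i \<in> P (X' ! i))) / ?N"
      unfolding smooth_dist_def by (rule prod_dividef)
    also have "\<dots> = of_bool (Z \<in> ?B) / ?N"
      using Z by (auto simp add: prod_of_bool_real box_def sentences_def)
    finally show "smooth_dist P L X' Z * of_bool (h Z = c) = of_bool (Z \<in> ?B \<and> h Z = c) / ?N"
      by simp
  qed simp
  also have "\<dots> = (\<Sum>Z\<in>sentences L. of_bool (Z \<in> ?B \<and> h Z = c)) / ?N"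
    by (simp add: sum_divide_distrib)
  also have "(\<Sum>Z\<in>sentences L. of_bool (Z \<in> ?B \<and> h Z = c) :: real)
     = real (card (sentences L \<inter> {Z. Z \<in> ?B \<and> h Z = c}))"
    by (rule sum_of_bool_eq) (simp_all add: fsen)
  also have "sentences L \<inter> {Z. Z \<in> ?B \<and> h Z = c} = {Z \<in> ?B. h Z = c}"
    using box_sub by blast
  finally show ?thesis .
qed

lemma prod_list_01:
  fixes s :: "real list"
  assumes "\<forall>x\<in>set s. 0 \<le> x \<and> x \<le> 1"
  shows "0 \<le> prod_list s \<and> prod_list s \<le> 1"
  using assms
proof (induction s)
  case (Cons a s)
  then show ?case by (auto intro: mult_le_one)
qed simp

lemma prod_take_sorted_le:
  fixes s :: "real list"
  assumes "sorted s" "\<forall>x\<in>set s. 0 \<le> x \<and> x \<le> 1" "M \<subseteq># mset s" "size M \<le> R"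
  shows "prod_list (take R s) \<le> prod_mset M"
  using assms
proof (induction s arbitrary: M R)
  case Nil
  then show ?case by simp
next
  case (Cons a s)
  show ?case
  proof (cases R)
    case 0
    then show ?thesis using Cons.prems(4) by simp
  next
    case (Suc R')
    have a01: "0 \<le> a" "a \<le> 1" using Cons.prems(2) by auto
    have srt: "sorted s" and amin: "\<forall>x\<in>set s. a \<le> x" using Cons.prems(1) by auto
    have s01: "\<forall>x\<in>set s. 0 \<le> x \<and> x \<le> 1" using Cons.prems(2) by auto
    show ?thesis
    proof (cases "a \<in># M")
      case True
      have sub: "M - {#a#} \<subseteq># mset s"
        using Cons.prems(3) by (simp add: subset_eq_diff_conv)
      have sz: "size (M - {#a#}) \<le> R'" using Cons.prems(4) True Suc
        by (simp add: size_Diff_submset)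
      have "prod_list (take R' s) \<le> prod_mset (M - {#a#})"
        using Cons.IH[OF srt s01 sub sz] .
      then have "a * prod_list (take R' s) \<le> a * prod_mset (M - {#a#})"
        using a01 by (simp add: mult_left_mono)
      then show ?thesis using True Suc by (simp add: prod_mset.remove[OF True])
    next
      case False
      have sub: "M \<subseteq># mset s"
      proof -
        have "M - {#a#} \<subseteq># mset s" using Cons.prems(3) by (simp add: subset_eq_diff_conv)
        then show ?thesis using diff_single_trivial[OF False] by simp
      qed
      show ?thesis
      proof (cases "M = {#}")
        case True
        have "0 \<le> prod_list (take R (a # s)) \<and> prod_list (take R (a # s)) \<le> 1"
          using Cons.prems(2) in_set_takeD[of _ R "a # s"] by (intro prod_list_01) blast
        then show ?thesis using True by simp
      next
        case False
        then obtain b where b: "b \<in># M" by blast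
        have bs: "b \<in> set s" using mset_subset_eqD[OF sub b] by simp
        have sub': "M - {#b#} \<subseteq># mset s"
          using sub diff_subset_eq_self[of M "{#b#}"] subset_mset.order_trans by blast
        have sz: "size (M - {#b#}) \<le> R'" using Cons.prems(4) b Suc
          by (simp add: size_Diff_submset)
        have IH: "prod_list (take R' s) \<le> prod_mset (M - {#b#})"
          using Cons.IH[OF srt s01 sub' sz] .
        have "0 \<le> prod_list (take R' s)"
          using s01 prod_list_01[of "take R' s"] by (meson in_set_takeD)
        have "a * prod_list (take R' s) \<le> b * prod_mset (M - {#b#})"
          apply (rule mult_mono)
          using amin bs IH a01 \<open>0 \<le> prod_list (take R' s)\<close> by auto
        then show ?thesis using Suc by (simp add: prod_mset.remove[OF b])
      qed
    qed
  qed
qed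

lemma mset_nth_upt: "mset xs = image_mset (nth xs) (mset_set {..<length xs})"
proof -
  have "mset xs = mset (map (nth xs) [0..<length xs])" by (simp add: map_nth)
  also have "\<dots> = image_mset (nth xs) (mset_set {..<length xs})"
    by (simp add: atLeast0LessThan)
  finally show ?thesis .
qed

lemma prod_subset_ge:
  fixes qs :: "real list"
  assumes "\<forall>x\<in>set qs. 0 \<le> x \<and> x \<le> 1" "J \<subseteq> {..<length qs}" "card J \<le> R"
  shows "prod_list (take R (sort qs)) \<le> (\<Prod>i\<in>J. qs ! i)"
proof -
  have fJ: "finite J" using assms(2) finite_subset by blast
  let ?M = "image_mset (nth qs) (mset_set J)"
  have "?M \<subseteq># image_mset (nth qs) (mset_set {..<length qs})"
    by (intro image_mset_subseteq_mono subset_imp_msubset_mset_set assms(2)) simp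
  also have "\<dots> = mset (sort qs)" by (simp add: mset_nth_upt[symmetric])
  finally have sub: "?M \<subseteq># mset (sort qs)" .
  have "prod_list (take R (sort qs)) \<le> prod_mset ?M"
    by (rule prod_take_sorted_le) (use assms(1,3) sub fJ in auto)
  also have "\<dots> = (\<Prod>i\<in>J. qs ! i)" by (simp add: prod_unfold_prod_mset)
  finally show ?thesis .
qed

lemma exists_J:
  fixes qs :: "real list"
  assumes "R \<le> length qs"
  shows "\<exists>J. J \<subseteq> {..<length qs} \<and> card J = R \<and> (\<Prod>i\<in>J. qs ! i) = prod_list (take R (sort qs))"
proof -
  define idx where "idx = sort_key (nth qs) [0..<length qs]"
  have mi: "mset idx = mset [0..<length qs]" by (simp add: idx_def)
  have di: "distinct idx" by (simp add: idx_def)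
  have seti: "set idx = {..<length qs}" using mi by (metis atLeast0LessThan set_mset_mset set_upt)
  have li: "length idx = length qs" using mi by (metis length_upt mset_eq_length minus_nat.diff_0)
  have srt: "sort qs = map (nth qs) idx"
  proof (rule properties_for_sort)
    show "mset (map (nth qs) idx) = mset qs"
    proof -
      have "mset (map (nth qs) idx) = image_mset (nth qs) (mset [0..<length qs])"
        using mi by simp
      also have "\<dots> = mset qs" by (metis mset_map map_nth)
      finally show ?thesis .
    qed
    show "sorted (map (nth qs) idx)" by (simp add: idx_def)
  qed
  define J where "J = set (take R idx)"
  have "J \<subseteq> {..<length qs}" using seti by (auto simp: J_def dest: in_set_takeD)
  moreover have "card J = R" using di assms li by (simp add: J_def distinct_card)
  moreover have "(\<Prod>i\<in>J. qs ! i) = prod_list (take R (sort qs))"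
    using di by (simp add: J_def srt prod.distinct_set_conv_list take_map)
  ultimately show ?thesis by blast
qed

lemma construct:
  fixes f :: "'a \<Rightarrow> 'b" and y yB :: 'b
  assumes fB: "finite B" and fB': "finite B'" and cB: "card B = card B'" and ne: "y \<noteq> yB"
  shows "\<exists>fs. card {Z\<in>B. fs Z = y} = card {Z\<in>B. f Z = y}
            \<and> card {Z\<in>B. fs Z = yB} = card {Z\<in>B. f Z = yB}
            \<and> card {Z\<in>B'. fs Z = y} = card {Z\<in>B. f Z = y} - card (B - B')
            \<and> card {Z\<in>B'. fs Z = yB} = min (card {Z\<in>B. f Z = yB}) (card (B \<inter> B')) + card (B - B')"
proof -
  define Y where "Y = {Z\<in>B. f Z = y}"
  define W where "W = {Z\<in>B. f Z = yB}"
  define A where "A = B - B'"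
  define C where "C = B \<inter> B'"
  define k where "k = card Y"
  define m where "m = card W"
  define a where "a = card A"
  define c where "c = card C"
  have fA: "finite A" "finite C" "finite Y" "finite W" using fB by (auto simp: A_def C_def Y_def W_def)
  have BAC: "B = A \<union> C" "A \<inter> C = {}" by (auto simp: A_def C_def)
  have N: "card B = a + c" unfolding a_def c_def BAC(1) using fA BAC(2) by (simp add: card_Un_disjoint)
  have YW: "Y \<inter> W = {}" "Y \<union> W \<subseteq> B" using ne by (auto simp: Y_def W_def)
  have km: "k + m \<le> a + c"
  proof -
    have "k + m = card (Y \<union> W)" using fA YW by (simp add: card_Un_disjoint k_def m_def)
    also have "\<dots> \<le> card B" using YW fB by (simp add: card_mono)
    finally show ?thesis using N by simp
  qed
  obtain Y1 where Y1: "Y1 \<subseteq> A" "card Y1 = min k a"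
    using obtain_subset_with_card_n[of "min k a" A] a_def by auto
  have "k - a \<le> c" using km by arith
  then obtain Y2 where Y2: "Y2 \<subseteq> C" "card Y2 = k - a"
    using obtain_subset_with_card_n[of "k - a" C] c_def by auto
  have cCY2: "card (C - Y2) = c - (k - a)"
    using Y2 fA by (simp add: card_Diff_subset c_def finite_subset)
  have "min m c \<le> c - (k - a)" using km by arith
  then obtain W2 where W2: "W2 \<subseteq> C - Y2" "card W2 = min m c"
    using obtain_subset_with_card_n[of "min m c" "C - Y2"] cCY2 by auto
  have cAY1: "card (A - Y1) = a - min k a"
    using Y1 fA by (simp add: card_Diff_subset a_def finite_subset)
  have "m - min m c \<le> a - min k a" using km by arith
  then obtain W1 where W1: "W1 \<subseteq> A - Y1" "card W1 = m - min m c"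
    using obtain_subset_with_card_n[of "m - min m c" "A - Y1"] cAY1 by auto
  define Oset where "Oset = B - (Y1 \<union> Y2 \<union> W1 \<union> W2)"
  have fin4: "finite Y1" "finite Y2" "finite W1" "finite W2"
    using fA Y1 Y2 W1 W2 by (auto intro: finite_subset)
  have sub4: "Y1 \<union> Y2 \<union> W1 \<union> W2 \<subseteq> B" using Y1 Y2 W1 W2 BAC by auto
  have c4: "card (Y1 \<union> Y2 \<union> W1 \<union> W2) = k + m"
  proof -
    have "card (Y1 \<union> Y2 \<union> W1 \<union> W2) = card Y1 + card Y2 + card W1 + card W2"
      using fin4 Y1 Y2 W1 W2 BAC(2)
      by (subst card_Un_disjoint, blast, blast, blast)+ auto
    then show ?thesis using Y1 Y2 W1 W2 by simp
  qed
  have cO: "card Oset = card B - (k + m)"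
    unfolding Oset_def using c4 sub4 fB card_Diff_subset[OF finite_subset[OF sub4 fB] sub4] by simp
  have cO': "card (B - (Y \<union> W)) = card B - (k + m)"
    using YW fA by (simp add: card_Diff_subset card_Un_disjoint k_def m_def)
  obtain \<tau> where tau: "bij_betw \<tau> Oset (B - (Y \<union> W))"
    using finite_same_card_bij[of Oset "B - (Y \<union> W)"] cO cO' fB unfolding Oset_def by auto
  have tauO: "\<And>Z. Z \<in> Oset \<Longrightarrow> f (\<tau> Z) \<noteq> y \<and> f (\<tau> Z) \<noteq> yB"
    using tau unfolding bij_betw_def Y_def W_def by auto
  define fs where "fs Z = (if Z \<in> Y1 \<union> Y2 then y else if Z \<in> W1 \<union> W2 then yB
                           else if Z \<in> Oset then f (\<tau> Z) else yB)" for Z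
  have dis: "(W1 \<union> W2) \<inter> (Y1 \<union> Y2) = {}" using Y1 Y2 W1 W2 BAC(2) by blast
  have subA: "Y1 \<inter> B' = {}" "W1 \<inter> B' = {}" "Y2 \<subseteq> B'" "W2 \<subseteq> B'"
    using Y1 W1 Y2 W2 unfolding A_def C_def by blast+
  have e1: "{Z\<in>B. fs Z = y} = Y1 \<union> Y2"
  proof (intro set_eqI iffI)
    fix Z assume "Z \<in> {Z\<in>B. fs Z = y}"
    then show "Z \<in> Y1 \<union> Y2" using tauO ne unfolding fs_def Oset_def by (auto split: if_splits)
  next
    fix Z assume "Z \<in> Y1 \<union> Y2"
    then show "Z \<in> {Z\<in>B. fs Z = y}" using sub4 unfolding fs_def by auto
  qed
  have e2: "{Z\<in>B. fs Z = yB} = W1 \<union> W2"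
  proof (intro set_eqI iffI)
    fix Z assume "Z \<in> {Z\<in>B. fs Z = yB}"
    then show "Z \<in> W1 \<union> W2" using tauO ne unfolding fs_def Oset_def by (auto split: if_splits)
  next
    fix Z assume "Z \<in> W1 \<union> W2"
    then show "Z \<in> {Z\<in>B. fs Z = yB}" using sub4 dis unfolding fs_def by auto
  qed
  have e3: "{Z\<in>B'. fs Z = y} = Y2"
  proof (intro set_eqI iffI)
    fix Z assume "Z \<in> {Z\<in>B'. fs Z = y}"
    then show "Z \<in> Y2" using tauO ne subA unfolding fs_def by (auto split: if_splits)
  next
    fix Z assume "Z \<in> Y2"
    then show "Z \<in> {Z\<in>B'. fs Z = y}" using subA unfolding fs_def by auto
  qed
  have e4: "{Z\<in>B'. fs Z = yB} = W2 \<union> (B' - B)"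
  proof (intro set_eqI iffI)
    fix Z assume Z: "Z \<in> {Z\<in>B'. fs Z = yB}"
    show "Z \<in> W2 \<union> (B' - B)"
    proof (cases "Z \<in> B")
      case True
      then show ?thesis using Z tauO ne subA unfolding fs_def Oset_def by (auto split: if_splits)
    qed (use Z in auto)
  next
    fix Z assume "Z \<in> W2 \<union> (B' - B)"
    then show "Z \<in> {Z\<in>B'. fs Z = yB}" using subA sub4 dis unfolding fs_def Oset_def by auto
  qed
  have cD: "card (B' - B) = card (B - B')"
    using cB fB fB' by (metis card_Diff_subset_Int finite_Int inf_commute)
  have r1: "card {Z\<in>B. fs Z = y} = k"
    unfolding e1 using fin4 Y1 Y2 BAC(2) by (subst card_Un_disjoint) auto
  have r2: "card {Z\<in>B. fs Z = yB} = m"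
    unfolding e2 using fin4 W1 W2 BAC(2) by (subst card_Un_disjoint) auto
  have r3: "card {Z\<in>B'. fs Z = y} = k - card (B - B')"
    unfolding e3 using Y2 a_def A_def by simp
  have r4: "card {Z\<in>B'. fs Z = yB} = min m (card (B \<inter> B')) + card (B - B')"
    unfolding e4 using fin4 W2 fB' cD c_def C_def by (subst card_Un_disjoint) auto
  show ?thesis using r1 r2 r3 r4 unfolding k_def m_def Y_def W_def by blast
qed

theorem theorem2:
  fixes S P :: "'w::finite \<Rightarrow> 'w set"
    and L R :: nat
    and f :: "'w list \<Rightarrow> 'y::finite"
    and X :: "'w list"
    and y yB :: 'y
  assumes syn_refl: "\<And>x. x \<in> S x"
    and syn_sym: "\<And>x x'. x' \<in> S x \<longleftrightarrow> x \<in> S x'"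
    and P_ne: "\<And>x. P x \<noteq> {}"
    and P_card: "\<And>x x'. x' \<in> S x \<Longrightarrow> card (P x) = card (P x')"
    and L_pos: "L \<ge> 1"
    and R_le: "R \<le> L"
    and labels: "card (UNIV :: 'y set) \<ge> 2"
    and X_len: "length X = L"
    and y_max: "\<And>c. g_RS P L f X c \<le> g_RS P L f X y"
    and yB_ne: "yB \<noteq> y"
    and yB_max: "\<And>c. c \<noteq> y \<Longrightarrow> g_RS P L f X c \<le> g_RS P L f X yB"
  shows "\<exists>fs :: 'w list \<Rightarrow> 'y.
           g_RS P L fs X y = g_RS P L f X y \<and>
           g_RS P L fs X yB = g_RS P L f X yB \<and>
           Min ((\<lambda>X'. g_RS P L fs X' y) ` adv_set S L R X)
             = max (g_RS P L fs X y - q_sent S P R X) 0 \<and>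
           Max ((\<lambda>X'. g_RS P L fs X' yB) ` adv_set S L R X)
             = min (g_RS P L fs X yB + q_sent S P R X) 1"
proof -
  define Bx where "Bx X' = box (\<lambda>i. P (X' ! i)) L" for X' :: "'w list"
  define N where "N = (\<Prod>i<L. card (P (X ! i)))"
  define Nr where "Nr = (\<Prod>i<L. real (card (P (X ! i))))"
  define qs where "qs = map (q_word S P) X"
  define qX where "qX = q_sent S P R X"
  define ratio where "ratio x x' = real (card (P x \<inter> P x')) / real (card (P x))" for x x' :: 'w
  have qX_def': "qX = 1 - prod_list (take R (sort qs))"
    by (simp add: qX_def q_sent_def qs_def)
  have NrN: "Nr = real N" by (simp add: Nr_def N_def)
  have cpos: "\<And>x. card (P x) > 0" using P_ne by (simp add: card_gt_0_iff)
  have Npos: "N > 0" using cpos P_ne by (simp add: N_def)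
  have finB: "\<And>X'. finite (Bx X')"
    using box_sub finite_sentences finite_subset unfolding Bx_def by metis
  have ratio_le: "\<And>x x'. ratio x x' \<le> 1" "\<And>x x'. 0 \<le> ratio x x'"
    using cpos by (auto simp: ratio_def divide_le_eq_1 card_mono)
  have ratio_self: "\<And>x. ratio x x = 1" using cpos P_ne by (simp add: ratio_def)
  have fimg: "\<And>x. finite ((\<lambda>x'. ratio x x') ` S x)" by simp
  have neimg: "\<And>x. (\<lambda>x'. ratio x x') ` S x \<noteq> {}" using syn_refl by blast
  have qw_def: "\<And>x. q_word S P x = Min ((\<lambda>x'. ratio x x') ` S x)"
    by (simp add: q_word_def ratio_def)
  have qw_le: "\<And>x x'. x' \<in> S x \<Longrightarrow> q_word S P x \<le> ratio x x'"
    unfolding qw_def using fimg by (intro Min_le) auto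
  have qw01: "\<And>x. 0 \<le> q_word S P x \<and> q_word S P x \<le> 1"
  proof -
    fix x
    have "q_word S P x \<in> (\<lambda>x'. ratio x x') ` S x" unfolding qw_def using fimg neimg by (rule Min_in)
    then show "0 \<le> q_word S P x \<and> q_word S P x \<le> 1" using ratio_le by auto
  qed
  have qs01: "\<forall>x\<in>set qs. 0 \<le> x \<and> x \<le> 1" using qw01 by (auto simp: qs_def)
  have lqs: "length qs = L" by (simp add: qs_def X_len)
  have adv: "\<And>X'. X' \<in> adv_set S L R X \<Longrightarrow> length X' = L \<and> (\<forall>i<L. X' ! i \<in> S (X ! i))
            \<and> card {i. i < L \<and> X' ! i \<noteq> X ! i} \<le> R"
    by (simp add: adv_set_def)
  have g_adv: "\<And>X' (h :: 'w list \<Rightarrow> 'y) c. X' \<in> adv_set S L R X \<Longrightarrow>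
      g_RS P L h X' c = real (card {Z \<in> Bx X'. h Z = c}) / Nr"
  proof -
    fix X' and h :: "'w list \<Rightarrow> 'y" and c assume X': "X' \<in> adv_set S L R X"
    have "(\<Prod>i<L. real (card (P (X' ! i)))) = Nr"
      unfolding Nr_def using adv[OF X'] P_card by (intro prod.cong) auto
    then show "g_RS P L h X' c = real (card {Z \<in> Bx X'. h Z = c}) / Nr"
      using g_card[of X' L P h c] adv[OF X'] by (simp add: Bx_def)
  qed
  have X_adv: "X \<in> adv_set S L R X" using syn_refl X_len by (simp add: adv_set_def)
  have cBx: "\<And>X'. X' \<in> adv_set S L R X \<Longrightarrow> card (Bx X') = N"
  proof -
    fix X' assume X': "X' \<in> adv_set S L R X"
    show "card (Bx X') = N" unfolding Bx_def card_box N_def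
      using adv[OF X'] P_card by (intro prod.cong) auto
  qed
  have Int_box: "\<And>X'. Bx X \<inter> Bx X' = box (\<lambda>i. P (X ! i) \<inter> P (X' ! i)) L"
    by (auto simp: Bx_def box_def)
  have ov: "\<And>X'. real (card (Bx X \<inter> Bx X')) / Nr = (\<Prod>i<L. ratio (X ! i) (X' ! i))"
    unfolding Int_box card_box Nr_def ratio_def of_nat_prod by (rule prod_dividef[symmetric])
  have ov_ge: "\<And>X'. X' \<in> adv_set S L R X \<Longrightarrow> real (card (Bx X \<inter> Bx X')) \<ge> (1 - qX) * Nr"
  proof -
    fix X' assume X': "X' \<in> adv_set S L R X"
    define Jc where "Jc = {i. i < L \<and> X' ! i \<noteq> X ! i}"
    have Jc: "Jc \<subseteq> {..<L}" "card Jc \<le> R" using adv[OF X'] by (auto simp: Jc_def)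
    have "(\<Prod>i<L. ratio (X ! i) (X' ! i)) = (\<Prod>i\<in>Jc. ratio (X ! i) (X' ! i))"
      using Jc ratio_self by (intro prod.mono_neutral_right) (auto simp: Jc_def)
    also have "\<dots> \<ge> (\<Prod>i\<in>Jc. qs ! i)"
      using Jc adv[OF X'] qw_le qw01 lqs by (intro prod_mono) (auto simp: qs_def X_len)
    moreover have "(\<Prod>i\<in>Jc. qs ! i) \<ge> prod_list (take R (sort qs))"
      using prod_subset_ge[OF qs01, of Jc R] Jc lqs by simp
    ultimately have "real (card (Bx X \<inter> Bx X')) / Nr \<ge> 1 - qX"
      using ov[of X'] qX_def' by linarith
    moreover have "Nr > 0" using Npos NrN by simp
    ultimately show "real (card (Bx X \<inter> Bx X')) \<ge> (1 - qX) * Nr"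
      by (simp add: pos_le_divide_eq)
  qed
  have Nrpos: "Nr > 0" using Npos NrN by simp
  have gX: "\<And>(h :: 'w list \<Rightarrow> 'y) c. g_RS P L h X c = real (card {Z \<in> Bx X. h Z = c}) / Nr"
    using g_adv[OF X_adv] .
  have diffs: "\<And>X'. X' \<in> adv_set S L R X \<Longrightarrow>
      real (card (Bx X - Bx X')) \<le> qX * Nr \<and> real (card (Bx X' - Bx X)) \<le> qX * Nr"
  proof -
    fix X' assume X': "X' \<in> adv_set S L R X"
    have i1: "card (Bx X \<inter> Bx X') \<le> N" using cBx[OF X_adv] finB
      by (metis Int_lower1 card_mono)
    have d1: "card (Bx X - Bx X') = N - card (Bx X \<inter> Bx X')"
      using card_Diff_subset_Int[of "Bx X" "Bx X'"] finB cBx[OF X_adv] by simp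
    have d2: "card (Bx X' - Bx X) = N - card (Bx X \<inter> Bx X')"
      using card_Diff_subset_Int[of "Bx X'" "Bx X"] finB cBx[OF X'] by (simp add: Int_commute)
    have "real (N - card (Bx X \<inter> Bx X')) = Nr - real (card (Bx X \<inter> Bx X'))"
      using i1 NrN by (simp add: of_nat_diff)
    also have "\<dots> \<le> qX * Nr" using ov_ge[OF X'] by (simp add: algebra_simps)
    finally show "real (card (Bx X - Bx X')) \<le> qX * Nr \<and> real (card (Bx X' - Bx X)) \<le> qX * Nr"
      using d1 d2 by simp
  qed
  have cnt: "\<And>X' (h :: 'w list \<Rightarrow> 'y) c. X' \<in> adv_set S L R X \<Longrightarrow>
      card {Z \<in> Bx X. h Z = c} \<le> card {Z \<in> Bx X'. h Z = c} + card (Bx X - Bx X')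
      \<and> card {Z \<in> Bx X'. h Z = c} \<le> card {Z \<in> Bx X. h Z = c} + card (Bx X' - Bx X)"
  proof -
    fix X' and h :: "'w list \<Rightarrow> 'y" and c
    have "card {Z \<in> Bx X. h Z = c} \<le> card ({Z \<in> Bx X'. h Z = c} \<union> (Bx X - Bx X'))"
      using finB by (intro card_mono) auto
    also have "\<dots> \<le> card {Z \<in> Bx X'. h Z = c} + card (Bx X - Bx X')" by (rule card_Un_le)
    finally have 1: "card {Z \<in> Bx X. h Z = c} \<le> card {Z \<in> Bx X'. h Z = c} + card (Bx X - Bx X')" .
    have "card {Z \<in> Bx X'. h Z = c} \<le> card ({Z \<in> Bx X. h Z = c} \<union> (Bx X' - Bx X))"
      using finB by (intro card_mono) auto
    also have "\<dots> \<le> card {Z \<in> Bx X. h Z = c} + card (Bx X' - Bx X)" by (rule card_Un_le)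
    finally show "card {Z \<in> Bx X. h Z = c} \<le> card {Z \<in> Bx X'. h Z = c} + card (Bx X - Bx X')
      \<and> card {Z \<in> Bx X'. h Z = c} \<le> card {Z \<in> Bx X. h Z = c} + card (Bx X' - Bx X)"
      using 1 by simp
  qed
  have bounds: "\<And>X' (h :: 'w list \<Rightarrow> 'y) c. X' \<in> adv_set S L R X \<Longrightarrow>
      g_RS P L h X c - qX \<le> g_RS P L h X' c \<and> g_RS P L h X' c \<le> g_RS P L h X c + qX
      \<and> 0 \<le> g_RS P L h X' c \<and> g_RS P L h X' c \<le> 1"
  proof -
    fix X' and h :: "'w list \<Rightarrow> 'y" and c assume X': "X' \<in> adv_set S L R X"
    define u where "u = real (card {Z \<in> Bx X. h Z = c})"
    define v where "v = real (card {Z \<in> Bx X'. h Z = c})"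
    have uv: "u \<le> v + qX * Nr" "v \<le> u + qX * Nr"
      using cnt[OF X', of h c] diffs[OF X'] unfolding u_def v_def by linarith+
    have v1: "v \<le> Nr" unfolding v_def using cBx[OF X'] finB NrN
      by (metis (no_types, lifting) card_mono mem_Collect_eq of_nat_le_iff subsetI)
    have "0 \<le> v" by (simp add: v_def)
    have g1: "g_RS P L h X c = u / Nr" "g_RS P L h X' c = v / Nr"
      using gX g_adv[OF X'] by (simp_all add: u_def v_def)
    show "g_RS P L h X c - qX \<le> g_RS P L h X' c \<and> g_RS P L h X' c \<le> g_RS P L h X c + qX
      \<and> 0 \<le> g_RS P L h X' c \<and> g_RS P L h X' c \<le> 1"
    proof -
      have e1: "(u - qX * Nr) / Nr = u / Nr - qX" using Nrpos by (simp add: diff_divide_distrib)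
      have e2: "(u + qX * Nr) / Nr = u / Nr + qX" using Nrpos by (simp add: add_divide_distrib)
      have a1: "(u - qX * Nr) / Nr \<le> v / Nr" using uv Nrpos by (intro divide_right_mono) auto
      have a2: "v / Nr \<le> (u + qX * Nr) / Nr" using uv Nrpos by (intro divide_right_mono) auto
      have a3: "0 \<le> v / Nr" using \<open>0 \<le> v\<close> Nrpos by simp
      have a4: "v / Nr \<le> 1" using v1 Nrpos by simp
      show ?thesis unfolding g1 using a1 a2 a3 a4 e1 e2 by simp
    qed
  qed
  obtain J where J: "J \<subseteq> {..<L}" "card J = R" "(\<Prod>i\<in>J. qs ! i) = prod_list (take R (sort qs))"
    using exists_J[of R qs] R_le lqs by auto
  have finJ: "finite J" using J(1) finite_subset by blast
  define w where "w x = (SOME x'. x' \<in> S x \<and> ratio x x' = q_word S P x)" for x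
  have w: "\<And>x. w x \<in> S x \<and> ratio x (w x) = q_word S P x"
  proof -
    fix x
    have "q_word S P x \<in> (\<lambda>x'. ratio x x') ` S x" unfolding qw_def using fimg neimg by (rule Min_in)
    then have "\<exists>x'. x' \<in> S x \<and> ratio x x' = q_word S P x" by auto
    then show "w x \<in> S x \<and> ratio x (w x) = q_word S P x" unfolding w_def by (rule someI_ex)
  qed
  define Xs where "Xs = map (\<lambda>i. if i \<in> J then w (X ! i) else X ! i) [0..<L]"
  have Xs_nth: "\<And>i. i < L \<Longrightarrow> Xs ! i = (if i \<in> J then w (X ! i) else X ! i)"
    by (simp add: Xs_def)
  have Xs_adv: "Xs \<in> adv_set S L R X"
  proof -
    have "{i. i < L \<and> Xs ! i \<noteq> X ! i} \<subseteq> J" using Xs_nth by (auto split: if_splits)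
    then have "card {i. i < L \<and> Xs ! i \<noteq> X ! i} \<le> R" using J(2) finJ by (metis card_mono)
    moreover have "\<forall>i<L. Xs ! i \<in> S (X ! i)" using Xs_nth w syn_refl by auto
    ultimately show ?thesis by (simp add: adv_set_def Xs_def)
  qed
  have ov_Xs: "real (card (Bx X \<inter> Bx Xs)) = (1 - qX) * Nr"
  proof -
    have "(\<Prod>i<L. ratio (X ! i) (Xs ! i)) = (\<Prod>i<L. if i \<in> J then qs ! i else 1)"
      using Xs_nth w ratio_self by (intro prod.cong) (auto simp: qs_def X_len)
    also have "\<dots> = (\<Prod>i\<in>{..<L} \<inter> J. qs ! i)" using prod.inter_restrict[of "{..<L}" "\<lambda>i. qs ! i" J] by simp
    also have "{..<L} \<inter> J = J" using J(1) by blast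
    finally have "real (card (Bx X \<inter> Bx Xs)) / Nr = 1 - qX"
      using ov[of Xs] J(3) qX_def' by simp
    then show ?thesis using Nrpos by (simp add: divide_eq_eq)
  qed
  have cB: "card (Bx X) = card (Bx Xs)" using cBx[OF X_adv] cBx[OF Xs_adv] by simp
  obtain fs where fs:
    "card {Z\<in>Bx X. fs Z = y} = card {Z\<in>Bx X. f Z = y}"
    "card {Z\<in>Bx X. fs Z = yB} = card {Z\<in>Bx X. f Z = yB}"
    "card {Z\<in>Bx Xs. fs Z = y} = card {Z\<in>Bx X. f Z = y} - card (Bx X - Bx Xs)"
    "card {Z\<in>Bx Xs. fs Z = yB} = min (card {Z\<in>Bx X. f Z = yB}) (card (Bx X \<inter> Bx Xs)) + card (Bx X - Bx Xs)"
    using construct[OF finB finB cB yB_ne[symmetric], of f] by blast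
  define k where "k = card {Z\<in>Bx X. f Z = y}"
  define m where "m = card {Z\<in>Bx X. f Z = yB}"
  define a where "a = card (Bx X - Bx Xs)"
  define cc where "cc = card (Bx X \<inter> Bx Xs)"
  have acN: "a + cc = N"
  proof -
    have "cc \<le> N" unfolding cc_def using cBx[OF X_adv] finB by (metis Int_lower1 card_mono)
    moreover have "a = N - cc"
      unfolding a_def cc_def using card_Diff_subset_Int[of "Bx X" "Bx Xs"] finB cBx[OF X_adv] by simp
    ultimately show ?thesis by simp
  qed
  have h1: "real cc = (1 - qX) * Nr" using ov_Xs cc_def by simp
  have h2: "real a + real cc = Nr" by (simp add: acN[symmetric] NrN)
  have ra: "real a = qX * Nr" using h1 h2 by (simp add: algebra_simps)
  have gy: "g_RS P L fs X y = g_RS P L f X y" by (simp only: gX fs(1))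
  have gyB: "g_RS P L fs X yB = g_RS P L f X yB" by (simp only: gX fs(2))
  have gfy: "g_RS P L fs X y = real k / Nr" by (simp only: gX fs(1) k_def)
  have gfyB: "g_RS P L fs X yB = real m / Nr" by (simp only: gX fs(2) m_def)
  have vy: "g_RS P L fs Xs y = max (g_RS P L fs X y - qX) 0"
  proof -
    have "g_RS P L fs Xs y = real (k - a) / Nr" using g_adv[OF Xs_adv] fs(3) k_def a_def by simp
    also have "real (k - a) = max (real k - qX * Nr) 0"
    proof (cases "a \<le> k")
      case True
      then show ?thesis using ra by (simp add: of_nat_diff)
    next
      case False
      then show ?thesis using ra by simp
    qed
    also have "max (real k - qX * Nr) 0 / Nr = max (real k / Nr - qX) 0"
    proof -
      have e: "(real k - qX * Nr) / Nr = real k / Nr - qX" using Nrpos by (simp add: diff_divide_distrib)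
      show ?thesis
      proof (cases "0 \<le> real k - qX * Nr")
        case True
        then have "0 \<le> (real k - qX * Nr) / Nr" using Nrpos by simp
        then show ?thesis using True e by simp
      next
        case False
        then have "(real k - qX * Nr) / Nr < 0" using Nrpos by (simp add: divide_neg_pos)
        then show ?thesis using False e by simp
      qed
    qed
    finally show ?thesis using gfy by simp
  qed
  have vyB: "g_RS P L fs Xs yB = min (g_RS P L fs X yB + qX) 1"
  proof -
    have "g_RS P L fs Xs yB = real (min m cc + a) / Nr" using g_adv[OF Xs_adv] fs(4) m_def a_def cc_def by simp
    also have "real (min m cc + a) = min (real m + qX * Nr) Nr"
    proof -
      have "min m cc + a = min (m + a) N" using acN by simp
      then have "real (min m cc + a) = min (real m + real a) (real N)" by simp
      then show ?thesis using ra NrN by simp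
    qed
    also have "min (real m + qX * Nr) Nr / Nr = min (real m / Nr + qX) 1"
    proof -
      have e: "(real m + qX * Nr) / Nr = real m / Nr + qX" using Nrpos by (simp add: add_divide_distrib)
      show ?thesis
      proof (cases "real m + qX * Nr \<le> Nr")
        case True
        then have "(real m + qX * Nr) / Nr \<le> 1" using Nrpos by simp
        then show ?thesis using True e by (simp add: min_def)
      next
        case False
        then have "(real m + qX * Nr) / Nr > 1" using Nrpos by simp
        then show ?thesis using False e Nrpos by (simp add: min_def)
      qed
    qed
    finally show ?thesis using gfyB by simp
  qed
  have fin_adv: "finite (adv_set S L R X)"
    by (rule finite_subset[OF _ finite_sentences[of L]]) (auto simp: adv_set_def sentences_def)
  have mn: "Min ((\<lambda>X'. g_RS P L fs X' y) ` adv_set S L R X) = max (g_RS P L fs X y - qX) 0"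
  proof (rule Min_eqI)
    show "finite ((\<lambda>X'. g_RS P L fs X' y) ` adv_set S L R X)" using fin_adv by simp
    show "max (g_RS P L fs X y - qX) 0 \<in> (\<lambda>X'. g_RS P L fs X' y) ` adv_set S L R X"
      using vy Xs_adv by (metis rev_image_eqI)
    fix v assume "v \<in> (\<lambda>X'. g_RS P L fs X' y) ` adv_set S L R X"
    then obtain X' where "X' \<in> adv_set S L R X" "v = g_RS P L fs X' y" by blast
    then show "max (g_RS P L fs X y - qX) 0 \<le> v" using bounds by auto
  qed
  have mx: "Max ((\<lambda>X'. g_RS P L fs X' yB) ` adv_set S L R X) = min (g_RS P L fs X yB + qX) 1"
  proof (rule Max_eqI)
    show "finite ((\<lambda>X'. g_RS P L fs X' yB) ` adv_set S L R X)" using fin_adv by simp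
    show "min (g_RS P L fs X yB + qX) 1 \<in> (\<lambda>X'. g_RS P L fs X' yB) ` adv_set S L R X"
      using vyB Xs_adv by (metis rev_image_eqI)
    fix v assume "v \<in> (\<lambda>X'. g_RS P L fs X' yB) ` adv_set S L R X"
    then obtain X' where "X' \<in> adv_set S L R X" "v = g_RS P L fs X' yB" by blast
    then show "v \<le> min (g_RS P L fs X yB + qX) 1" using bounds by auto
  qed
  show ?thesis using gy gyB mn mx unfolding qX_def by blast
qed

end
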